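(* There is a family $\mathcal{H}$ of countably infinite $G_\delta$-subsets of the Euclidean real line $\mathbb{R}$ such that $|\mathcal{H}|=\mathfrak{c}$ and any two distinct members of $\mathcal{H}$ are non-homeomorphic as subspaces of $\mathbb{R}$.
   Context: $\mathfrak{c}=|\mathbb{R}|$. *)

theory Defs
  imports "HOL-Analysis.Analysis" "HOL-Library.Equipollence"
begin

end

theory Submission
  imports Defs
begin


definition der :: "real set \<Rightarrow> real set" where "der A = {x\<in>A. x islimpt A}"

definition lc :: "real set \<Rightarrow> real \<Rightarrow> bool" where
  "lc A x \<longleftrightarrow> (\<exists>U K. open U \<and> x \<in> U \<and> compact K \<and> K \<subseteq> A \<and> U \<inter> A \<subseteq> K)"

lemma der_subset: "der A \<subseteq> A" by (auto simp: der_def)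

lemma homeo_islimpt:
  fixes A B :: "real set"
  assumes h: "homeomorphism A B f g" and x: "x \<in> A" and l: "x islimpt A"
  shows "f x islimpt B"
proof -
  from l obtain s where s: "\<forall>n. s n \<in> A - {x}" "s \<longlonglongrightarrow> x" using l islimpt_sequential by meson
  have cf: "continuous_on A f" and fA: "f ` A = B" and gf: "\<And>y. y \<in> A \<Longrightarrow> g (f y) = y"
    using h by (auto simp: homeomorphism_def)
  have sA: "\<forall>n. s n \<in> A" using s by auto
  have "(f \<circ> s) \<longlonglongrightarrow> f x" using cf sA s(2) x unfolding continuous_on_sequentially by blast
  moreover have "\<forall>n. (f \<circ> s) n \<in> B - {f x}"
  proof
    fix n
    have "s n \<in> A" "s n \<noteq> x" using s by auto
    moreover have "f (s n) \<noteq> f x" using gf \<open>s n \<in> A\<close> \<open>s n \<noteq> x\<close> x by metis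
    ultimately show "(f \<circ> s) n \<in> B - {f x}" using fA by auto
  qed
  ultimately show ?thesis unfolding islimpt_sequential by (intro exI[where x="f \<circ> s"]) simp
qed

lemma homeo_der_sub:
  assumes h: "homeomorphism A B f g"
  shows "f ` der A \<subseteq> der B"
proof
  fix y assume "y \<in> f ` der A"
  then obtain x where x: "x \<in> der A" "y = f x" by auto
  then have xA: "x \<in> A" and xl: "x islimpt A" by (auto simp: der_def)
  have "f x islimpt B" using homeo_islimpt[OF h xA xl] .
  moreover have "f x \<in> B" using homeomorphism_image1[OF h] xA by blast
  ultimately show "y \<in> der B" using x by (simp add: der_def)
qed

lemma homeo_der_image:
  assumes h: "homeomorphism A B f g"
  shows "f ` der A = der B"
proof -
  have h': "homeomorphism B A g f" using h homeomorphism_sym by blast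
  have 1: "f ` der A \<subseteq> der B" using homeo_der_sub[OF h] .
  have 2: "g ` der B \<subseteq> der A" using homeo_der_sub[OF h'] .
  have "der B \<subseteq> f ` der A"
  proof
    fix y assume y: "y \<in> der B"
    then have "y \<in> B" by (auto simp: der_def)
    then have "y = f (g y)" using homeomorphism_apply2[OF h] by metis
    then show "y \<in> f ` der A" using 2 y by blast
  qed
  with 1 show ?thesis by blast
qed

lemma homeo_der:
  assumes h: "homeomorphism A B f g"
  shows "homeomorphism (der A) (der B) f g"
  using homeomorphism_of_subsets[OF h der_subset der_subset homeo_der_image[OF h]] .

lemma homeo_der_pow:
  assumes h: "homeomorphism A B f g"
  shows "homeomorphism ((der ^^ r) A) ((der ^^ r) B) f g"
proof (induction r)
  case 0 then show ?case using h by simp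
next
  case (Suc r) then show ?case using homeo_der by simp
qed

lemma homeo_lc:
  assumes h: "homeomorphism A B f g" and x: "x \<in> A" and l: "lc A x"
  shows "lc B (f x)"
proof -
  obtain U K where UK: "open U" "x \<in> U" "compact K" "K \<subseteq> A" "U \<inter> A \<subseteq> K"
    using l by (auto simp: lc_def)
  have cf: "continuous_on A f" and fA: "f ` A = B" and gf: "\<And>y. y \<in> A \<Longrightarrow> g (f y) = y"
    and cg: "continuous_on B g" and gB: "g ` B = A" and fg: "\<And>y. y \<in> B \<Longrightarrow> f (g y) = y"
    using h by (auto simp: homeomorphism_def)
  obtain V where V: "open V" "V \<inter> B = g -` U \<inter> B"
    using cg UK(1) by (meson continuous_on_open_invariant)
  have "compact (f ` K)" by (rule compact_continuous_image[OF continuous_on_subset[OF cf UK(4)] UK(3)])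
  moreover have "f ` K \<subseteq> B" using UK(4) fA by blast
  moreover have "f x \<in> V"
  proof -
    have "f x \<in> B" using x fA by blast
    moreover have "g (f x) \<in> U" using gf[OF x] UK(2) by simp
    ultimately have "f x \<in> g -` U \<inter> B" by simp
    then show ?thesis using V(2) by blast
  qed
  moreover have "V \<inter> B \<subseteq> f ` K"
  proof
    fix y assume y: "y \<in> V \<inter> B"
    then have "y \<in> g -` U \<inter> B" using V(2) by blast
    then have "g y \<in> U" "g y \<in> A" using gB by auto
    then have "g y \<in> K" using UK by blast
    then show "y \<in> f ` K" using fg y by (metis IntD2 image_eqI)
  qed
  ultimately show ?thesis using V unfolding lc_def by blast
qed

definition cbinv :: "real set \<Rightarrow> nat set" where
  "cbinv A = {r. \<exists>x \<in> (der ^^ r) A - (der ^^ Suc r) A. \<not> lc A x}"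

lemma der_pow_subset: "(der ^^ r) A \<subseteq> A"
  by (induction r) (use der_subset in auto)

lemma homeo_inv_sub:
  assumes h: "homeomorphism A B f g"
  shows "cbinv A \<subseteq> cbinv B"
proof
  fix r assume "r \<in> cbinv A"
  then obtain x where x: "x \<in> (der ^^ r) A" "x \<notin> (der ^^ Suc r) A" "\<not> lc A x"
    by (auto simp: cbinv_def)
  have h': "homeomorphism B A g f" using h homeomorphism_sym by blast
  have xA: "x \<in> A" using x(1) der_pow_subset by blast
  have gfx: "g (f x) = x" using h xA by (auto simp: homeomorphism_def)
  have fxB: "f x \<in> B" using h xA by (auto simp: homeomorphism_def)
  have 1: "f x \<in> (der ^^ r) B" using homeo_der_pow[OF h, of r] x(1) by (auto simp: homeomorphism_def)
  have 2: "f x \<notin> (der ^^ Suc r) B"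
  proof
    assume "f x \<in> (der ^^ Suc r) B"
    then have "g (f x) \<in> (der ^^ Suc r) A" using homeo_der_pow[OF h', of "Suc r"]
      by (auto simp: homeomorphism_def simp del: funpow.simps)
    then show False using x(2) gfx by simp
  qed
  have 3: "\<not> lc B (f x)" using homeo_lc[OF h' fxB] gfx x(3) by auto
  show "r \<in> cbinv B" using 1 2 3 by (auto simp: cbinv_def simp del: funpow.simps)
qed

lemma homeomorphic_inv: "A homeomorphic B \<Longrightarrow> cbinv A = cbinv B"
  by (metis homeo_inv_sub homeomorphic_def homeomorphism_sym subset_antisym)



definition phi :: "nat \<Rightarrow> real \<Rightarrow> real" where "phi k t = (1/4)^k * (2 + t) / 4"
definition G :: "real set \<Rightarrow> real set" where "G A = insert 0 (\<Union>k. phi k ` A)"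
primrec W :: "nat \<Rightarrow> real set" where
  "W 0 = {0}" | "W (Suc m) = G (W m)"
definition E :: "nat \<Rightarrow> real set" where "E m = G (W m - {0})"

lemma pow4_le: "j < k \<Longrightarrow> 4 * (1/4::real)^k \<le> (1/4)^j"
proof -
  assume "j < k"
  then obtain d where k: "k = Suc (j + d)" using less_iff_Suc_add by auto
  have "(1/4::real)^k = (1/4)^j * (1/4) * (1/4)^d" by (simp add: k power_add)
  also have "\<dots> \<le> (1/4)^j * (1/4)" by (simp add: power_le_one)
  finally show ?thesis by simp
qed

lemma phi_bounds:
  assumes "0 \<le> t" "t \<le> 1"
  shows "(1/4)^(Suc k) < phi k t" "phi k t < (1/4)^k" "0 < phi k t" "phi k t \<le> 3/4"
proof -
  have p: "(0::real) < (1/4)^k" by simp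
  have p1: "(1/4::real)^k \<le> 1" by (simp add: power_le_one)
  show "(1/4)^(Suc k) < phi k t" using p assms by (simp add: phi_def field_simps)
  show "phi k t < (1/4)^k" using p assms by (simp add: phi_def field_simps)
  show "0 < phi k t" using p assms by (simp add: phi_def)
  have "(1/4::real)^k * (2 + t) \<le> 1 * 3" using p p1 assms by (intro mult_mono) auto
  then show "phi k t \<le> 3/4" unfolding phi_def by simp
qed

lemma phi_in_U:
  assumes "0 \<le> t" "t \<le> 1" "(1/4)^(Suc k) < phi j t" "phi j t < (1/4)^k"
  shows "j = k"
proof (rule ccontr)
  assume "j \<noteq> k"
  then consider "j < k" | "k < j" by linarith
  then show False
  proof cases
    case 1
    have "4 * (1/4::real)^k \<le> (1/4)^j" using pow4_le[OF 1] .
    moreover have "(1/4::real)^j * 2 \<le> (1/4)^j * (2 + t)" using assms(1) by simp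
    moreover have "(0::real) \<le> (1/4)^j" by simp
    ultimately have "(1/4)^k \<le> phi j t" unfolding phi_def by linarith
    then show False using assms by simp
  next
    case 2
    have "4 * (1/4::real)^j \<le> (1/4)^k" using pow4_le[OF 2] .
    moreover have "(1/4::real)^j * (2 + t) \<le> (1/4)^j * 3" using assms(2) by simp
    moreover have "(0::real) \<le> (1/4)^j" by simp
    ultimately have "phi j t \<le> (1/4)^(Suc k)" unfolding phi_def power_Suc by linarith
    then show False using assms by simp
  qed
qed

lemma phi_inj:
  assumes "0 \<le> a" "a \<le> 1" "0 \<le> b" "b \<le> 1" "phi j a = phi k b"
  shows "j = k \<and> a = b"
proof -
  have "j = k" using phi_in_U[OF assms(1,2), of k] phi_bounds[OF assms(3,4), of k] assms(5) by simp
  then show ?thesis using assms(5) by (simp add: phi_def)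
qed

lemma islimpt_local:
  assumes "open V" "x \<in> V" "V \<inter> A = V \<inter> B"
  shows "x islimpt A \<longleftrightarrow> x islimpt B"
proof -
  have *: "x islimpt P \<longleftrightarrow> x islimpt (V \<inter> P)" for P
  proof
    assume l: "x islimpt P"
    show "x islimpt (V \<inter> P)" unfolding islimpt_def
    proof (intro allI impI)
      fix T assume "x \<in> T" "open T"
      then obtain y where "y \<in> P" "y \<in> T \<inter> V" "y \<noteq> x"
        using l assms(1,2) unfolding islimpt_def by (meson IntI open_Int)
      then show "\<exists>y\<in>V \<inter> P. y \<in> T \<and> y \<noteq> x" by blast
    qed
  next
    assume "x islimpt (V \<inter> P)" then show "x islimpt P"
      using islimpt_subset by blast
  qed
  show ?thesis using *[of A] *[of B] assms(3) by simp
qed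

lemma affine_homeo:
  fixes a c :: real assumes "a \<noteq> 0"
  shows "homeomorphism A ((\<lambda>t. c + a * t) ` A) (\<lambda>t. c + a * t) (\<lambda>t. (t - c) / a)"
proof (rule homeomorphismI)
  show "continuous_on A (\<lambda>t. c + a * t)" by (intro continuous_intros)
  show "continuous_on ((\<lambda>t. c + a * t) ` A) (\<lambda>t. (t - c) / a)" using assms by (intro continuous_intros) auto
  show "(\<lambda>t. c + a * t) ` A \<subseteq> (\<lambda>t. c + a * t) ` A" by simp
  show "(\<lambda>t. (t - c) / a) ` ((\<lambda>t. c + a * t) ` A) \<subseteq> A" using assms by auto
  show "\<And>x. x \<in> A \<Longrightarrow> (c + a * x - c) / a = x" using assms by simp
  show "\<And>y. y \<in> (\<lambda>t. c + a * t) ` A \<Longrightarrow> c + a * ((y - c) / a) = y" using assms by auto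
qed

lemma der_affine:
  fixes a c :: real assumes "a \<noteq> 0"
  shows "der ((\<lambda>t. c + a * t) ` A) = (\<lambda>t. c + a * t) ` der A"
proof -
  have "homeomorphism A ((\<lambda>t. c + a * t) ` A) (\<lambda>t. c + a * t) (\<lambda>t. (t - c) / a)"
    by (rule affine_homeo[OF assms])
  from homeo_der_image[OF this] show ?thesis by simp
qed

lemma phi_affine: "phi k = (\<lambda>t. (1/4)^k / 2 + ((1/4)^k / 4) * t)"
  by (auto simp: phi_def field_simps)

lemma der_phi: "der (phi k ` A) = phi k ` der A"
  unfolding phi_affine by (rule der_affine) simp

lemma phi_01: "t \<in> {0..1} \<Longrightarrow> phi k t \<in> {0..1}"
  using phi_bounds(3,4)[of t k] by auto

lemma G_sub: "A \<subseteq> {0..1} \<Longrightarrow> G A \<subseteq> {0..1}"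
proof -
  assume A: "A \<subseteq> {0..1}"
  have "phi k t \<in> {0..1}" if "t \<in> A" for k t using phi_01 that A by blast
  then show ?thesis unfolding G_def by auto
qed

lemma phi_tendsto: "(\<lambda>k. phi k a) \<longlonglongrightarrow> 0"
proof -
  have "(\<lambda>k. (1/4::real)^k * ((2 + a) / 4)) \<longlonglongrightarrow> 0 * ((2 + a) / 4)"
    by (intro tendsto_mult tendsto_const LIMSEQ_realpow_zero) auto
  then show ?thesis by (simp add: phi_def)
qed

lemma der_G:
  assumes A: "A \<subseteq> {0..1}" "A \<noteq> {}"
  shows "der (G A) = G (der A)"
proof (rule set_eqI)
  fix x
  show "x \<in> der (G A) \<longleftrightarrow> x \<in> G (der A)"
  proof (cases "x = 0")
    case True
    obtain a where a: "a \<in> A" using A by auto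
    then have "a \<in> {0..1}" using A by auto
    then have "\<forall>k. phi k a \<in> G A - {0}"
    proof (intro allI)
      fix k
      have "0 < phi k a" using phi_bounds(3)[of a k] \<open>a \<in> {0..1}\<close> by auto
      then show "phi k a \<in> G A - {0}" using a by (auto simp: G_def)
    qed
    then have "0 islimpt G A" using phi_tendsto[of a] unfolding islimpt_sequential
      by (intro exI[where x="\<lambda>k. phi k a"]) simp
    then show ?thesis using True by (auto simp: der_def G_def)
  next
    case False
    have "x \<in> G A \<longleftrightarrow> (\<exists>k a. a \<in> A \<and> x = phi k a)" using False by (auto simp: G_def)
    show ?thesis
    proof
      assume "x \<in> der (G A)"
      then have xG: "x \<in> G A" and xl: "x islimpt G A" by (auto simp: der_def)
      then obtain k a where ka: "a \<in> A" "x = phi k a" using False by (auto simp: G_def)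
      have a01: "0 \<le> a" "a \<le> 1" using ka A by auto
      define V where "V = {(1/4::real)^(Suc k) <..< (1/4)^k}"
      have xV: "x \<in> V" using phi_bounds[OF a01] ka by (simp add: V_def)
      have VG: "V \<inter> G A = V \<inter> phi k ` A"
      proof -
        have "y \<in> phi k ` A" if yV: "y \<in> V" and yG: "y \<in> G A" for y
        proof -
          have "y \<noteq> 0" using yV by (simp add: V_def)
          then obtain j b where "b \<in> A" "y = phi j b" using yG by (auto simp: G_def)
          moreover have "j = k"
          proof -
            have b01: "0 \<le> b" "b \<le> 1" using A \<open>b \<in> A\<close> by auto
            have "(1/4)^Suc k < phi j b" "phi j b < (1/4)^k" using yV \<open>y = phi j b\<close> by (simp_all add: V_def)
            then show ?thesis using phi_in_U[OF b01] by blast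
          qed
          ultimately show ?thesis by blast
        qed
        moreover have "phi k ` A \<subseteq> G A" by (auto simp: G_def)
        ultimately show ?thesis by blast
      qed
      have "open V" by (simp add: V_def)
      have "x islimpt G A \<longleftrightarrow> x islimpt phi k ` A" by (rule islimpt_local[OF \<open>open V\<close> xV VG])
      then have "x islimpt phi k ` A" using xl by blast
      then have "x \<in> der (phi k ` A)" using ka by (auto simp: der_def)
      then have "x \<in> phi k ` der A" using der_phi by simp
      then show "x \<in> G (der A)" by (auto simp: G_def)
    next
      assume "x \<in> G (der A)"
      then obtain k a where ka: "a \<in> der A" "x = phi k a" using False by (auto simp: G_def)
      have aA: "a \<in> A" using ka der_subset by auto
      have a01: "0 \<le> a" "a \<le> 1" using aA A by auto
      have "x \<in> der (phi k ` A)" using der_phi ka by auto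
      then have "x islimpt phi k ` A" by (simp add: der_def)
      then have "x islimpt G A" by (rule islimpt_subset) (auto simp: G_def)
      moreover have "x \<in> G A" using ka aA by (auto simp: G_def)
      ultimately show "x \<in> der (G A)" by (simp add: der_def)
    qed
  qed
qed

lemma der_finite: "finite A \<Longrightarrow> der A = {}"
  by (auto simp: der_def islimpt_finite)

lemma der_G_empty: "der (G {}) = {}"
  by (simp add: G_def der_finite)

lemma der_minus_point: "der (A - {a}) = der A - {a}"
proof -
  have "x islimpt (A - {a}) \<longleftrightarrow> x islimpt A" if "x \<noteq> a" for x
  proof
    assume "x islimpt (A - {a})" then show "x islimpt A" by (rule islimpt_subset) auto
  next
    assume "x islimpt A"
    then have "x islimpt (insert a (A - {a}))" by (rule islimpt_subset) auto
    then show "x islimpt (A - {a})" by (simp only: islimpt_insert)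
  qed
  then show ?thesis by (auto simp: der_def)
qed

lemma W_props: "W m \<subseteq> {0..1} \<and> 0 \<in> W m"
proof (induction m)
  case 0 then show ?case by simp
next
  case (Suc m) then show ?case using G_sub[of "W m"] by (simp add: G_def)
qed

lemma W_Suc_ne: "W (Suc m) - {0} \<noteq> {}"
proof -
  have "phi 0 0 \<in> W (Suc m)" using W_props[of m] by (auto simp: G_def)
  moreover have "phi 0 0 \<noteq> 0" by (simp add: phi_def)
  ultimately show ?thesis by blast
qed

lemma der_W: "der (W (Suc m)) = W m"
proof (induction m)
  case 0
  have "der (G {0}) = G (der {0})" by (rule der_G) auto
  also have "\<dots> = {0}" by (simp add: der_finite G_def)
  finally show ?case by simp
next
  case (Suc m)
  have "der (W (Suc (Suc m))) = der (G (W (Suc m)))" by simp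
  also have "\<dots> = G (der (W (Suc m)))" by (rule der_G) (use W_props[of "Suc m"] in auto)
  finally have "der (W (Suc (Suc m))) = G (der (W (Suc m)))" .
  then show ?case using Suc by simp
qed

lemma der_E_Suc: "der (E (Suc m)) = E m"
proof -
  have "W (Suc m) - {0} \<subseteq> {0..1}" using W_props[of "Suc m"] by auto
  then have "der (E (Suc m)) = G (der (W (Suc m) - {0}))"
    unfolding E_def using der_G W_Suc_ne by blast
  also have "\<dots> = E m" by (simp add: der_minus_point der_W E_def del: W.simps)
  finally show ?thesis .
qed

lemma E0: "E 0 = {0}" by (simp add: E_def G_def)

lemma der_pow_E: "(der ^^ r) (E m) = (if r \<le> m then E (m - r) else {})"
proof (induction r arbitrary: m)
  case 0 then show ?case by simp
next
  case (Suc r)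
  have "(der ^^ Suc r) (E m) = (der ^^ r) (der (E m))" by (simp add: funpow_Suc_right del: funpow.simps)
  show ?case
  proof (cases m)
    case 0
    have "der (E m) = {}" using 0 E0 der_finite by simp
    moreover have "(der ^^ r) {} = {}" using der_pow_subset[of r "{}"] by auto
    ultimately show ?thesis using \<open>(der ^^ Suc r) (E m) = _\<close> 0 by simp
  next
    case (Suc m')
    then show ?thesis using \<open>(der ^^ Suc r) (E m) = _\<close> Suc.IH[of m'] der_E_Suc by simp
  qed
qed



definition tr :: "nat \<Rightarrow> real \<Rightarrow> real" where "tr n t = 3 * real n + t"
definition Piece :: "nat set \<Rightarrow> nat \<Rightarrow> real set" where
  "Piece S n = (if n \<in> S then E (Suc n) else {0})"
definition XS :: "nat set \<Rightarrow> real set" where "XS S = (\<Union>n. tr n ` Piece S n)"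

lemma E_props: "E m \<subseteq> {0..1} \<and> 0 \<in> E m"
proof -
  have "W m - {0} \<subseteq> {0..1}" using W_props[of m] by auto
  then show ?thesis unfolding E_def using G_sub by (auto simp: G_def)
qed

lemma Piece_props: "Piece S n \<subseteq> {0..1} \<and> 0 \<in> Piece S n"
  using E_props by (simp add: Piece_def)

lemma tr_near:
  assumes "a \<in> {0..1}" "b \<in> {0..1}" "\<bar>tr m a - tr n b\<bar> < 2"
  shows "m = n"
proof (rule ccontr)
  have a: "0 \<le> a" "a \<le> 1" and b: "0 \<le> b" "b \<le> 1" using assms(1,2) by auto
  have d: "(3 * real m + a) - (3 * real n + b) < 2" "-2 < (3 * real m + a) - (3 * real n + b)"
    using assms(3) unfolding tr_def abs_less_iff by linarith+
  assume "m \<noteq> n"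
  then consider "Suc m \<le> n" | "Suc n \<le> m" by linarith
  then show False
  proof cases
    case 1
    then have "real (Suc m) \<le> real n" by (rule of_nat_mono)
    then have "real m + 1 \<le> real n" by simp
    then show False using d a b by linarith
  next
    case 2
    then have "real (Suc n) \<le> real m" by (rule of_nat_mono)
    then have "real n + 1 \<le> real m" by simp
    then show False using d a b by linarith
  qed
qed

lemma tr_inj:
  assumes "a \<in> {0..1}" "b \<in> {0..1}" "tr m a = tr n b"
  shows "m = n \<and> a = b"
proof -
  have "\<bar>tr m a - tr n b\<bar> < 2" using assms(3) by simp
  then have "m = n" using tr_near[OF assms(1,2)] by blast
  then show ?thesis using assms(3) by (simp add: tr_def)
qed

lemma der_UN_sep:
  fixes A U :: "nat \<Rightarrow> real set"
  assumes AU: "\<And>n. A n \<subseteq> U n" and oU: "\<And>n. open (U n)"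
    and dis: "\<And>n m. n \<noteq> m \<Longrightarrow> U n \<inter> A m = {}"
  shows "der (\<Union>n. A n) = (\<Union>n. der (A n))"
proof (rule set_eqI)
  fix x
  have loc: "x islimpt (\<Union>n. A n) \<longleftrightarrow> x islimpt A n" if xA: "x \<in> A n" for n
  proof (rule islimpt_local[OF oU])
    show "x \<in> U n" using xA AU by blast
    show "U n \<inter> (\<Union>n. A n) = U n \<inter> A n"
    proof
      show "U n \<inter> (\<Union>n. A n) \<subseteq> U n \<inter> A n"
      proof
        fix y assume y: "y \<in> U n \<inter> (\<Union>n. A n)"
        then obtain m where m: "y \<in> A m" by blast
        have "m = n"
        proof (rule ccontr)
          assume "m \<noteq> n"
          then have "U n \<inter> A m = {}" using dis by metis
          then show False using y m by blast
        qed
        then show "y \<in> U n \<inter> A n" using y m by blast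
      qed
    qed blast
  qed
  show "x \<in> der (\<Union>n. A n) \<longleftrightarrow> x \<in> (\<Union>n. der (A n))"
  proof
    assume "x \<in> der (\<Union>n. A n)"
    then have xU: "x \<in> (\<Union>n. A n)" and xl: "x islimpt (\<Union>n. A n)" unfolding der_def by blast+
    then obtain n where xn: "x \<in> A n" by blast
    then have "x islimpt A n" using loc xl by blast
    then have "x \<in> der (A n)" using xn unfolding der_def by blast
    then show "x \<in> (\<Union>n. der (A n))" by blast
  next
    assume "x \<in> (\<Union>n. der (A n))"
    then obtain n where "x \<in> der (A n)" by blast
    then have xn: "x \<in> A n" and xl: "x islimpt A n" unfolding der_def by blast+
    then have "x islimpt (\<Union>n. A n)" using loc by blast
    moreover have "x \<in> (\<Union>n. A n)" using xn by blast
    ultimately show "x \<in> der (\<Union>n. A n)" unfolding der_def by blast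
  qed
qed

lemma tr_affine: "tr n = (\<lambda>t. 3 * real n + 1 * t)"
  by (auto simp: tr_def)

lemma der_tr: "der (tr n ` A) = tr n ` der A"
  unfolding tr_affine by (rule der_affine) simp

lemma der_pow_XS: "(der ^^ r) (XS S) = (\<Union>n. tr n ` (der ^^ r) (Piece S n))"
proof (induction r)
  case 0 then show ?case by (simp add: XS_def)
next
  case (Suc r)
  define D where "D n = (der ^^ r) (Piece S n)" for n
  have Dsub: "D n \<subseteq> {0..1}" for n using der_pow_subset Piece_props unfolding D_def by blast
  have "(der ^^ Suc r) (XS S) = der (\<Union>n. tr n ` D n)" using Suc by (simp add: D_def)
  also have "\<dots> = (\<Union>n. der (tr n ` D n))"
  proof (rule der_UN_sep)
    show "tr n ` D n \<subseteq> {3 * real n - 1 <..< 3 * real n + 2}" for n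
      using Dsub[of n] by (auto simp: tr_def)
    show "open {3 * real n - 1 <..< 3 * real n + 2}" for n by simp
    show "{3 * real n - 1 <..< 3 * real n + 2} \<inter> tr m ` D m = {}" if "n \<noteq> m" for n m
    proof -
      have "False" if "y \<in> D m" "tr m y \<in> {3 * real n - 1 <..< 3 * real n + 2}" for y
      proof -
        have "y \<in> {0..1}" using that Dsub by blast
        moreover have "\<bar>tr m y - tr n 0\<bar> < 2" using that(2) by (auto simp: tr_def)
        ultimately have "m = n" using tr_near[of y 0 m n] by simp
        then show False using \<open>n \<noteq> m\<close> by simp
      qed
      then show ?thesis by blast
    qed
  qed
  also have "\<dots> = (\<Union>n. tr n ` der (D n))" by (simp add: der_tr)
  finally show ?case by (simp add: D_def)
qed

lemma der_pow_Piece_in: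
  assumes "n \<in> S" "r \<le> Suc n"
  shows "0 \<in> (der ^^ r) (Piece S n)"
  using assms E_props by (simp add: Piece_def der_pow_E)

lemma der_pow_Piece_out:
  assumes "n \<in> S" "Suc n < r"
  shows "(der ^^ r) (Piece S n) = {}"
  using assms by (simp add: Piece_def der_pow_E)

lemma rank_in:
  assumes "n \<in> S" "r \<le> Suc n"
  shows "tr n 0 \<in> (der ^^ r) (XS S)"
  using der_pow_Piece_in[OF assms] unfolding der_pow_XS by blast

lemma rank_bound:
  assumes "n \<in> S" "tr n 0 \<in> (der ^^ r) (XS S)"
  shows "r \<le> Suc n"
proof (rule ccontr)
  assume "\<not> r \<le> Suc n"
  then have e: "(der ^^ r) (Piece S n) = {}" using der_pow_Piece_out[OF assms(1)] by simp
  from assms(2) obtain m y where my: "y \<in> (der ^^ r) (Piece S m)" "tr n 0 = tr m y"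
    unfolding der_pow_XS by blast
  have "y \<in> {0..1}" using my(1) der_pow_subset Piece_props by blast
  then have "m = n \<and> y = 0" using tr_inj[of y 0 m n] my(2) by simp
  then show False using my(1) e by simp
qed



lemma phi_cont: "continuous_on A (phi k)"
  unfolding phi_affine by (intro continuous_intros)

lemma closed_G:
  assumes cA: "compact A" and A01: "A \<subseteq> {0..1}"
  shows "closed (G A)"
  unfolding closed_limpt
proof (intro allI impI)
  fix x assume xl: "x islimpt G A"
  have "x islimpt {0..1::real}" using xl G_sub[OF A01] islimpt_subset by blast
  then have x01: "x \<in> {0..1}" using closed_atLeastAtMost[of "0::real" 1] unfolding closed_limpt by blast
  show "x \<in> G A"
  proof (cases "x = 0")
    case True then show ?thesis by (simp add: G_def)
  next
    case False
    then have xpos: "0 < x" using x01 by simp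
    obtain K where K: "(1/4::real)^K < x/2" using real_arch_pow_inv[of "x/2" "1/4"] xpos by auto
    define F where "F = (\<Union>k\<in>{..K}. phi k ` A)"
    have cF: "closed F" unfolding F_def
    proof (rule closed_UN)
      show "finite {..K}" by simp
      show "\<forall>k\<in>{..K}. closed (phi k ` A)"
        using compact_imp_closed compact_continuous_image[OF phi_cont cA] by blast
    qed
    have sub: "ball x (x/2) \<inter> G A \<subseteq> F"
    proof
      fix y assume y: "y \<in> ball x (x/2) \<inter> G A"
      then have "dist x y < x/2" by simp
      then have "\<bar>x - y\<bar> < x/2" by (simp add: dist_real_def)
      then have ypos: "x/2 < y" unfolding abs_less_iff by linarith
      then have "y \<noteq> 0" using xpos by simp
      then obtain k a where ka: "a \<in> A" "y = phi k a" using y by (auto simp: G_def)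
      have a01: "0 \<le> a" "a \<le> 1" using ka(1) A01 by auto
      have "k \<le> K"
      proof (rule ccontr)
        assume "\<not> k \<le> K"
        then have "(1/4::real)^k \<le> (1/4)^K" by (intro power_decreasing) auto
        moreover have "phi k a < (1/4)^k" using phi_bounds(2)[OF a01] .
        ultimately show False using K ypos ka(2) by linarith
      qed
      then show "y \<in> F" using ka unfolding F_def by blast
    qed
    have "x islimpt (ball x (x/2) \<inter> G A) \<longleftrightarrow> x islimpt G A"
      by (rule islimpt_local[of "ball x (x/2)"]) (use xpos in auto)
    then have "x islimpt F" using xl sub islimpt_subset by blast
    then have "x \<in> F" using cF unfolding closed_limpt by blast
    then show ?thesis unfolding F_def G_def by blast
  qed
qed

lemma compact_W: "compact (W m)"
proof (induction m)
  case 0 then show ?case by simp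
next
  case (Suc m)
  have "bounded (W (Suc m))" using W_props[of "Suc m"] bounded_subset bounded_closed_interval by blast
  moreover have "closed (W (Suc m))" using closed_G[OF Suc W_props[THEN conjunct1]] by simp
  ultimately show ?case using compact_eq_bounded_closed by blast
qed

lemma lc_local:
  assumes "lc B x" "B \<subseteq> A" "open V" "x \<in> V" "V \<inter> A \<subseteq> B"
  shows "lc A x"
proof -
  obtain U K where UK: "open U" "x \<in> U" "compact K" "K \<subseteq> B" "U \<inter> B \<subseteq> K"
    using assms(1) unfolding lc_def by blast
  have "open (U \<inter> V)" using UK(1) assms(3) by blast
  moreover have "x \<in> U \<inter> V" using UK(2) assms(4) by blast
  moreover have "K \<subseteq> A" using UK(4) assms(2) by blast
  moreover have "(U \<inter> V) \<inter> A \<subseteq> K" using UK(5) assms(5) by blast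
  ultimately show ?thesis unfolding lc_def using UK(3) by blast
qed

lemma lc_W_minus:
  assumes w: "w \<in> W m" "w \<noteq> 0"
  shows "lc (W m - {0}) w"
proof -
  have wpos: "0 < w" using w W_props[of m] by force
  have "open (ball w (w/2))" by simp
  moreover have "w \<in> ball w (w/2)" using wpos by simp
  moreover have "compact (W m \<inter> cball w (w/2))" using compact_W by (simp add: compact_Int_closed)
  moreover have "W m \<inter> cball w (w/2) \<subseteq> W m - {0}"
  proof
    fix y assume "y \<in> W m \<inter> cball w (w/2)"
    then have "y \<in> W m" "dist w y \<le> w/2" by auto
    then have "y \<noteq> 0" using wpos by (auto simp: dist_real_def)
    then show "y \<in> W m - {0}" using \<open>y \<in> W m\<close> by blast
  qed
  moreover have "ball w (w/2) \<inter> (W m - {0}) \<subseteq> W m \<inter> cball w (w/2)" by auto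
  ultimately show ?thesis unfolding lc_def by blast
qed

definition hh :: "nat \<Rightarrow> nat \<Rightarrow> real \<Rightarrow> real" where
  "hh n k = (\<lambda>t. (3 * real n + (1/4)^k / 2) + ((1/4)^k / 4) * t)"

lemma hh_eq: "hh n k t = tr n (phi k t)"
  by (simp add: hh_def tr_def phi_def field_simps)

lemma hh_homeo: "homeomorphism A (hh n k ` A) (hh n k) (\<lambda>t. (t - (3 * real n + (1/4)^k / 2)) / ((1/4)^k / 4))"
  unfolding hh_def by (rule affine_homeo) simp

lemma gap_notin:
  assumes "B \<subseteq> {0..1}"
  shows "phi k 0 \<notin> G (B - {0})"
proof
  assume "phi k 0 \<in> G (B - {0})"
  moreover have "phi k 0 \<noteq> 0" using phi_bounds(3)[of 0 k] by simp
  ultimately obtain j b where jb: "b \<in> B - {0}" "phi k 0 = phi j b" by (auto simp: G_def)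
  have "b \<in> {0..1}" using jb(1) assms by blast
  then have "k = j \<and> 0 = b" using phi_inj[of 0 b k j] jb(2) by simp
  then show False using jb(1) by simp
qed

lemma gap_notin_XS:
  assumes "n \<in> S"
  shows "tr n (phi k 0) \<notin> XS S"
proof
  assume "tr n (phi k 0) \<in> XS S"
  then obtain m p where mp: "p \<in> Piece S m" "tr n (phi k 0) = tr m p" unfolding XS_def by blast
  have p01: "p \<in> {0..1}" using mp(1) Piece_props by blast
  have "phi k 0 \<in> {0..1}" using phi_01 by simp
  then have "n = m \<and> phi k 0 = p" using tr_inj[OF _ p01] mp(2) by blast
  then have "phi k 0 \<in> E (Suc n)" using mp(1) assms by (simp add: Piece_def)
  moreover have "W (Suc n) \<subseteq> {0..1}" using W_props by blast
  ultimately show False using gap_notin unfolding E_def by blast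
qed



lemma nonlc:
  assumes nS: "n \<in> S"
  shows "\<not> lc (XS S) (tr n 0)"
proof
  assume "lc (XS S) (tr n 0)"
  then obtain U K where UK: "open U" "tr n 0 \<in> U" "compact K" "K \<subseteq> XS S" "U \<inter> XS S \<subseteq> K"
    unfolding lc_def by blast
  obtain e where e: "e > 0" "ball (tr n 0) e \<subseteq> U" using UK(1,2) open_contains_ball by blast
  obtain k where k: "(1/4::real)^k < e" using real_arch_pow_inv[of e "1/4"] e(1) by auto
  define g where "g = tr n (phi k 0)"
  have pk: "phi k 0 < (1/4)^k" "0 < phi k 0" using phi_bounds[of 0 k] by auto
  have "g \<in> ball (tr n 0) e" using pk k by (simp add: g_def tr_def dist_real_def)
  then have gU: "g \<in> U" using e(2) by blast
  define m where "m = Suc n"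
  have "0 \<in> der (W m)" using der_W[of n] W_props[of n] by (simp add: m_def)
  then have "0 islimpt W m" "0 \<in> W m" by (auto simp: der_def)
  then have "hh n k 0 islimpt hh n k ` W m" using homeo_islimpt[OF hh_homeo] by blast
  moreover have "hh n k ` W m \<subseteq> insert (hh n k 0) (hh n k ` (W m - {0}))" by blast
  ultimately have "hh n k 0 islimpt insert (hh n k 0) (hh n k ` (W m - {0}))" using islimpt_subset by blast
  then have "hh n k 0 islimpt hh n k ` (W m - {0})" by (simp only: islimpt_insert)
  moreover have "hh n k 0 = g" by (simp add: hh_eq g_def)
  ultimately have l1: "g islimpt hh n k ` (W m - {0})" by simp
  have sub: "hh n k ` (W m - {0}) \<subseteq> XS S"
  proof
    fix y assume "y \<in> hh n k ` (W m - {0})"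
    then obtain w where w: "w \<in> W m - {0}" "y = hh n k w" by blast
    have "phi k w \<in> E m" using w(1) unfolding E_def G_def by blast
    then have "phi k w \<in> Piece S n" using nS by (simp add: Piece_def m_def)
    then show "y \<in> XS S" using w(2) hh_eq unfolding XS_def by blast
  qed
  have "g islimpt XS S" using l1 sub islimpt_subset by blast
  moreover have "g islimpt XS S \<longleftrightarrow> g islimpt (U \<inter> XS S)"
    by (rule islimpt_local[OF UK(1) gU]) blast
  ultimately have "g islimpt K" using UK(5) islimpt_subset by blast
  then have "g \<in> K" using compact_imp_closed[OF UK(3)] unfolding closed_limpt by blast
  then have "g \<in> XS S" using UK(4) by blast
  then show False using gap_notin_XS[OF nS] g_def by blast
qed

lemma yeslc:
  assumes xX: "x \<in> XS S" and notgap: "\<And>n. n \<in> S \<Longrightarrow> x \<noteq> tr n 0"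
  shows "lc (XS S) x"
proof -
  obtain n p where np: "p \<in> Piece S n" "x = tr n p" using xX unfolding XS_def by blast
  have near: "m = n" if "y \<in> XS S" "\<bar>y - tr n 0\<bar> < 2" "y = tr m q" "q \<in> Piece S m" for y m q
  proof -
    have "q \<in> {0..1}" using that(4) Piece_props by blast
    then show ?thesis using tr_near[of q 0 m n] that(2,3) by simp
  qed
  show ?thesis
  proof (cases "n \<in> S")
    case False
    then have p0: "p = 0" using np(1) by (simp add: Piece_def)
    have "lc {x} x" unfolding lc_def by (rule exI[of _ UNIV], rule exI[of _ "{x}"]) simp
    moreover have "{x} \<subseteq> XS S" using xX by blast
    moreover have "ball x 1 \<inter> XS S \<subseteq> {x}"
    proof
      fix y assume y: "y \<in> ball x 1 \<inter> XS S"
      then obtain m q where mq: "q \<in> Piece S m" "y = tr m q" unfolding XS_def by blast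
      have "\<bar>tr n 0 - y\<bar> < 1" using y np(2) p0 by (simp add: dist_real_def)
      then have "\<bar>y - tr n 0\<bar> < 2" by linarith
      then have "m = n" using near y mq by blast
      then have "q = 0" using mq(1) False by (simp add: Piece_def)
      then show "y \<in> {x}" using mq(2) \<open>m = n\<close> np(2) p0 by simp
    qed
    ultimately show ?thesis using lc_local[of "{x}" x "XS S" "ball x 1"] by simp
  next
    case True
    define m where "m = Suc n"
    have "p \<noteq> 0" using notgap[OF True] np(2) by blast
    moreover have "p \<in> G (W m - {0})" using np(1) True by (simp add: Piece_def E_def m_def)
    ultimately obtain k w where kw: "w \<in> W m - {0}" "p = phi k w" unfolding G_def by blast
    have w01: "0 \<le> w" "w \<le> 1" using kw(1) W_props[of m] by auto
    have "lc (W m - {0}) w" using lc_W_minus kw(1) by blast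
    then have "lc (hh n k ` (W m - {0})) (hh n k w)" using homeo_lc[OF hh_homeo] kw(1) by blast
    moreover have hx: "hh n k w = x" using hh_eq kw(2) np(2) by simp
    ultimately have lcB: "lc (hh n k ` (W m - {0})) x" by simp
    have BX: "hh n k ` (W m - {0}) \<subseteq> XS S"
    proof
      fix y assume "y \<in> hh n k ` (W m - {0})"
      then obtain v where v: "v \<in> W m - {0}" "y = hh n k v" by blast
      have "phi k v \<in> E m" using v(1) unfolding E_def G_def by blast
      then have "phi k v \<in> Piece S n" using True by (simp add: Piece_def m_def)
      then show "y \<in> XS S" using v(2) hh_eq unfolding XS_def by blast
    qed
    define V where "V = {tr n ((1/4)^Suc k) <..< tr n ((1/4)^k)}"
    have oV: "open V" by (simp add: V_def)
    have xV: "x \<in> V" using phi_bounds[OF w01, of k] np(2) kw(2) by (simp add: V_def tr_def)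
    have VX: "V \<inter> XS S \<subseteq> hh n k ` (W m - {0})"
    proof
      fix y assume y: "y \<in> V \<inter> XS S"
      then obtain m' q where mq: "q \<in> Piece S m'" "y = tr m' q" unfolding XS_def by blast
      have b0: "(1/4::real)^k \<le> 1" by (rule power_le_one) auto
      have b1: "(1/4::real)^Suc k \<le> 1" "(1/4::real)^k \<le> 1" using b0 by simp_all
      have yV: "tr n ((1/4)^Suc k) < y" "y < tr n ((1/4)^k)" using y by (auto simp: V_def)
      have "\<bar>y - tr n 0\<bar> < 2" using yV b1 by (simp add: tr_def abs_less_iff)
      then have "m' = n" using near y mq by blast
      then have qE: "q \<in> G (W m - {0})" and yq: "y = tr n q"
        using mq True by (simp_all add: Piece_def E_def m_def)
      have qU: "(1/4)^Suc k < q" "q < (1/4)^k" using yV yq by (simp_all add: tr_def)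
      then have "q \<noteq> 0" by simp
      then obtain j v where jv: "v \<in> W m - {0}" "q = phi j v" using qE unfolding G_def by blast
      have v01: "0 \<le> v" "v \<le> 1" using jv(1) W_props[of m] by auto
      have "j = k" using phi_in_U[OF v01] qU jv(2) by blast
      then have "y = hh n k v" using yq jv(2) hh_eq by simp
      then show "y \<in> hh n k ` (W m - {0})" using jv(1) by blast
    qed
    show ?thesis by (rule lc_local[OF lcB BX oV xV VX])
  qed
qed

lemma inv_XS: "cbinv (XS S) = Suc ` S"
proof
  show "cbinv (XS S) \<subseteq> Suc ` S"
  proof
    fix r assume "r \<in> cbinv (XS S)"
    then obtain x where x: "x \<in> (der ^^ r) (XS S)" "x \<notin> (der ^^ Suc r) (XS S)" "\<not> lc (XS S) x"
      unfolding cbinv_def by blast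
    have "x \<in> XS S" using x(1) der_pow_subset by blast
    then obtain n where nS: "n \<in> S" and xn: "x = tr n 0" using yeslc x(3) by blast
    have "r \<le> Suc n" using rank_bound[OF nS] x(1) xn by blast
    moreover have "\<not> Suc r \<le> Suc n" using rank_in[OF nS] x(2) xn by blast
    ultimately have "r = Suc n" by simp
    then show "r \<in> Suc ` S" using nS by blast
  qed
next
  show "Suc ` S \<subseteq> cbinv (XS S)"
  proof
    fix r assume "r \<in> Suc ` S"
    then obtain n where nS: "n \<in> S" and r: "r = Suc n" by blast
    have "tr n 0 \<in> (der ^^ r) (XS S)" using rank_in[OF nS, of r] r by blast
    moreover have "tr n 0 \<notin> (der ^^ Suc r) (XS S)" using rank_bound[OF nS, of "Suc r"] r by auto
    moreover have "\<not> lc (XS S) (tr n 0)" using nonlc[OF nS] .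
    ultimately show "r \<in> cbinv (XS S)" unfolding cbinv_def by blast
  qed
qed



lemma countable_G: "countable A \<Longrightarrow> countable (G A)"
  unfolding G_def by (intro countable_insert countable_UN countable_image) auto

lemma countable_W: "countable (W m)"
  by (induction m) (simp_all add: countable_G)

lemma countable_XS: "countable (XS S)"
  unfolding XS_def Piece_def E_def
  by (intro countable_UN countable_image) (auto intro: countable_G countable_W)

lemma infinite_XS: "infinite (XS S)"
proof -
  have "inj (\<lambda>n. tr n 0)" by (rule injI) (simp add: tr_def)
  then have "infinite (range (\<lambda>n. tr n 0))" by (rule range_inj_infinite)
  moreover have "range (\<lambda>n. tr n 0) \<subseteq> XS S" using Piece_props unfolding XS_def by blast
  ultimately show ?thesis using infinite_super by blast
qed

lemma closed_local_crit:
  fixes C :: "real set"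
  assumes "\<And>x. closed (C \<inter> cball x (1/2))"
  shows "closed C"
  unfolding closed_limpt
proof (intro allI impI)
  fix x assume xl: "x islimpt C"
  have "x islimpt (ball x (1/2) \<inter> C) \<longleftrightarrow> x islimpt C"
    by (rule islimpt_local[of "ball x (1/2)"]) auto
  then have "x islimpt (ball x (1/2) \<inter> C)" using xl by blast
  moreover have "ball x (1/2) \<inter> C \<subseteq> C \<inter> cball x (1/2)" by auto
  ultimately have "x islimpt (C \<inter> cball x (1/2))" by (rule islimpt_subset)
  then show "x \<in> C" using assms[of x] unfolding closed_limpt by blast
qed

definition CP :: "nat set \<Rightarrow> nat \<Rightarrow> real set" where
  "CP S n = (if n \<in> S then W (Suc (Suc n)) else {0})"
definition CC :: "nat set \<Rightarrow> real set" where "CC S = (\<Union>n. tr n ` CP S n)"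
definition Gaps :: "nat set \<Rightarrow> real set" where "Gaps S = (\<lambda>(n, k). tr n (phi k 0)) ` (S \<times> UNIV)"

lemma CP_props: "CP S n \<subseteq> {0..1} \<and> compact (CP S n)"
  unfolding CP_def using W_props[of "Suc (Suc n)"] compact_W[of "Suc (Suc n)"] by (auto simp del: W.simps)

lemma tr_cont: "continuous_on A (tr n)"
  unfolding tr_affine by (intro continuous_intros)

lemma closed_CC: "closed (CC S)"
proof (rule closed_local_crit)
  fix x
  show "closed (CC S \<inter> cball x (1/2))"
  proof (cases "CC S \<inter> cball x (1/2) = {}")
    case True then show ?thesis by simp
  next
    case False
    then obtain y0 where "y0 \<in> CC S" "dist x y0 \<le> 1/2" by auto
    then obtain n0 p0 where y0: "p0 \<in> CP S n0" "y0 = tr n0 p0" "dist x y0 \<le> 1/2"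
      unfolding CC_def by blast
    have "CC S \<inter> cball x (1/2) = tr n0 ` CP S n0 \<inter> cball x (1/2)"
    proof
      show "CC S \<inter> cball x (1/2) \<subseteq> tr n0 ` CP S n0 \<inter> cball x (1/2)"
      proof
        fix y assume y: "y \<in> CC S \<inter> cball x (1/2)"
        then obtain m q where mq: "q \<in> CP S m" "y = tr m q" unfolding CC_def by blast
        have "dist x y \<le> 1/2" using y by simp
        then have a: "\<bar>x - y\<bar> \<le> 1/2" by (simp add: dist_real_def)
        have b: "\<bar>x - y0\<bar> \<le> 1/2" using y0(3) by (simp add: dist_real_def)
        have "\<bar>y - y0\<bar> < 2" using a b unfolding abs_le_iff abs_less_iff by linarith
        then have "\<bar>tr m q - tr n0 p0\<bar> < 2" using y0(2) mq(2) by simp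
        moreover have "q \<in> {0..1}" "p0 \<in> {0..1}" using mq(1) y0(1) CP_props by blast+
        ultimately have "m = n0" using tr_near by blast
        then show "y \<in> tr n0 ` CP S n0 \<inter> cball x (1/2)" using y mq by blast
      qed
    next
      show "tr n0 ` CP S n0 \<inter> cball x (1/2) \<subseteq> CC S \<inter> cball x (1/2)" unfolding CC_def by blast
    qed
    moreover have "compact (tr n0 ` CP S n0)"
      using compact_continuous_image[OF tr_cont] CP_props by blast
    ultimately show ?thesis using compact_imp_closed closed_Int closed_cball by metis
  qed
qed

lemma XS_eq: "XS S = CC S - Gaps S"
proof
  show "XS S \<subseteq> CC S - Gaps S"
  proof
    fix x assume "x \<in> XS S"
    then obtain n p where np: "p \<in> Piece S n" "x = tr n p" unfolding XS_def by blast
    have "p \<in> CP S n"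
    proof (cases "n \<in> S")
      case True
      have "E (Suc n) \<subseteq> G (W (Suc n))" unfolding E_def G_def by blast
      then have "E (Suc n) \<subseteq> W (Suc (Suc n))" by (simp only: W.simps(2))
      moreover have "p \<in> E (Suc n)" using np(1) True by (simp add: Piece_def)
      ultimately have "p \<in> W (Suc (Suc n))" by blast
      then show ?thesis using True by (simp add: CP_def del: W.simps)
    next
      case False then show ?thesis using np(1) by (simp add: CP_def Piece_def)
    qed
    then have "x \<in> CC S" using np(2) unfolding CC_def by blast
    moreover have "x \<notin> Gaps S"
    proof
      assume "x \<in> Gaps S"
      then obtain n' k where nk: "n' \<in> S" "x = tr n' (phi k 0)" unfolding Gaps_def by auto
      then show False using gap_notin_XS \<open>x \<in> XS S\<close> by blast
    qed
    ultimately show "x \<in> CC S - Gaps S" by blast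
  qed
next
  show "CC S - Gaps S \<subseteq> XS S"
  proof
    fix x assume x: "x \<in> CC S - Gaps S"
    then obtain n p where np: "p \<in> CP S n" "x = tr n p" unfolding CC_def by blast
    show "x \<in> XS S"
    proof (cases "n \<in> S")
      case False
      then have "p \<in> Piece S n" using np(1) by (simp add: CP_def Piece_def)
      then show ?thesis using np(2) unfolding XS_def by blast
    next
      case True
      then have pG: "p \<in> G (W (Suc n))" using np(1) by (simp add: CP_def)
      have "p \<in> E (Suc n)"
      proof (cases "p = 0")
        case True then show ?thesis using E_props by blast
      next
        case False
        then obtain k w where kw: "w \<in> W (Suc n)" "p = phi k w" using pG unfolding G_def by blast
        have "w \<noteq> 0"
        proof
          assume "w = 0"
          then have "x = (\<lambda>(n, k). tr n (phi k 0)) (n, k)" using np(2) kw(2) by simp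
          moreover have "(n, k) \<in> S \<times> UNIV" using True by simp
          ultimately have "x \<in> Gaps S" unfolding Gaps_def by (rule image_eqI)
          then show False using x by blast
        qed
        then show ?thesis using kw unfolding E_def G_def by blast
      qed
      then have "p \<in> Piece S n" using True by (simp add: Piece_def)
      then show ?thesis using np(2) unfolding XS_def by blast
    qed
  qed
qed

lemma gdelta_XS: "gdelta_in euclidean (XS S)"
proof -
  have "gdelta_in euclidean (CC S)"
    using closed_imp_gdelta_in[OF metrizable_space_euclidean] closed_CC closed_closedin by blast
  moreover have "fsigma_in euclidean (Gaps S)"
  proof -
    have "countable (Gaps S)" unfolding Gaps_def by simp
    then have "countable ((\<lambda>x. {x}) ` Gaps S)" by simp
    moreover have "\<And>T. T \<in> (\<lambda>x. {x}) ` Gaps S \<Longrightarrow> fsigma_in euclidean T"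
      using closed_imp_fsigma_in closed_closedin closed_singleton by blast
    ultimately have "fsigma_in euclidean (\<Union> ((\<lambda>x. {x}) ` Gaps S))" by (rule fsigma_in_Union)
    then show ?thesis by simp
  qed
  ultimately show ?thesis unfolding XS_eq by (rule gdelta_in_diff)
qed

theorem theorem3:
  shows "\<exists>\<H> :: real set set.
           (\<forall>H\<in>\<H>. countable H \<and> infinite H \<and> gdelta_in euclidean H) \<and>
           \<H> \<approx> (UNIV :: real set) \<and>
           (\<forall>H1\<in>\<H>. \<forall>H2\<in>\<H>. H1 \<noteq> H2 \<longrightarrow> \<not> (H1 homeomorphic H2))"
proof (intro exI[of _ "range XS"] conjI)
  show "\<forall>H\<in>range XS. countable H \<and> infinite H \<and> gdelta_in euclidean H"
    using countable_XS infinite_XS gdelta_XS by blast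
  have inj: "inj XS"
  proof (rule injI)
    fix S T assume "XS S = XS T"
    then have "Suc ` S = Suc ` T" using inv_XS by metis
    then show "S = T" by (simp add: inj_image_eq_iff)
  qed
  have "range XS \<approx> (UNIV :: nat set set)" using inj_on_image_eqpoll_self[OF inj] .
  then show "range XS \<approx> (UNIV :: real set)" using nat_sets_eqpoll_reals eqpoll_trans by blast
  show "\<forall>H1\<in>range XS. \<forall>H2\<in>range XS. H1 \<noteq> H2 \<longrightarrow> \<not> H1 homeomorphic H2"
  proof (intro ballI impI notI)
    fix H1 H2 assume h: "H1 \<in> range XS" "H2 \<in> range XS" "H1 \<noteq> H2" "H1 homeomorphic H2"
    then obtain S T where ST: "H1 = XS S" "H2 = XS T" by blast
    then have "S \<noteq> T" using h(3) by blast
    moreover have "Suc ` S = Suc ` T" using homeomorphic_inv[OF h(4)] ST inv_XS by metis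
    ultimately show False by (simp add: inj_image_eq_iff)
  qed
qed

end
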